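(* Let $\mathcal{J}$ be an adapted almost tangent structure on $T^{*}M$, let $\rho$ be a $\mathcal{J}$-regular vector field, and let $\mathcal{N}$ be an arbitrary nonlinear connection on $T^*M$ with horizontal and vertical projectors $h,v$ (no relation between $\rho$ and $\mathcal{N}$ is assumed). Let $\nabla$ be the dynamical covariant derivative with respect to $\rho$ and $\mathcal{N}$. Then $$h\circ\mathcal{L}_\rho\circ\mathcal{J}=-h,\qquad \mathcal{J}\circ\mathcal{L}_\rho\circ v=-v,$$ $$\nabla\mathcal{J}=\mathcal{L}_\rho\mathcal{J}+h-v,$$ and in local coordinates $$\nabla\mathcal{J}=\Big(\rho(t_{ij})+t_{kj}\frac{\partial\xi^k}{\partial x^i}-t_{ik}\frac{\partial\chi_j}{\partial p_k}+2\mathcal{N}_{ij}\Big)dx^i\otimes\frac{\partial}{\partial p_j}.$$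
   Context: $M$ is a smooth $n$-manifold, $T^*M$ its cotangent bundle with local coordinates $(x^i,p_i)$; summation over repeated indices. $VT^*M$ is the vertical distribution spanned by $\frac{\partial}{\partial p_i}$. A nonlinear connection $\mathcal{N}$ is a distribution $HT^*M$ supplementary to $VT^*M$; locally it has adapted basis $\frac{\delta}{\delta x^i}=\frac{\partial}{\partial x^i}+\mathcal{N}_{ij}\frac{\partial}{\partial p_j}$ with dual forms $dx^i$, $\delta p_i=dp_i-\mathcal{N}_{ij}dx^j$; its horizontal and vertical projectors are $h=\frac{\delta}{\delta x^i}\otimes dx^i$, $v=\frac{\partial}{\partial p_i}\otimes\delta p_i$, and the connection is also identified with the $(1,1)$-tensor $\mathcal{N}=h-v$. An adapted almost tangent structure is a $(1,1)$-tensor field $\mathcal{J}$ of rank $n$ with $\mathcal{J}^2=0$ and $\operatorname{Im}\mathcal{J}=\operatorname{Ker}\mathcal{J}=VT^*M$; locally $\mathcal{J}=t_{ij}dx^i\otimes\frac{\partial}{\partial p_j}$, and $(t^{ij})$ denotes the inverse matrix, $t_{ij}t^{jk}=\delta_i^k$. A vector field $\rho=\xi^i(x,p)\frac{\partial}{\partial x^i}+\chi_i(x,p)\frac{\partial}{\partial p_i}$ is $\mathcal{J}$-regular if $\mathcal{J}[\rho,\mathcal{J}X]=-\mathcal{J}X$ for all vector fields $X$. $\mathcal{L}_\rho$ denotes the operator $X\mapsto[\rho,X]$ on vector fields, and compositions such as $h\circ\mathcal{L}_\rho\circ\mathcal{J}$ are compositions of operators on vector fields; $\mathcal{L}_\rho\mathcal{J}$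 is the $(1,1)$-tensor $\mathcal{L}_\rho\circ\mathcal{J}-\mathcal{J}\circ\mathcal{L}_\rho$. The dynamical covariant derivative with respect to $\rho$ and $\mathcal{N}$ is the tensor derivation $\nabla$ on $T^*M\setminus\{0\}$ (i.e. $\mathbb{R}$-linear, type preserving, satisfying the Leibniz rule for tensor products and commuting with contractions) determined by $\nabla f=\rho(f)$ for functions and $\nabla X=h[\rho,hX]+v[\rho,vX]$ for vector fields, i.e. $\nabla=h\circ\mathcal{L}_\rho\circ h+v\circ\mathcal{L}_\rho\circ v$; on a $(1,1)$-tensor $T$ it acts by $\nabla T=\nabla\circ T-T\circ\nabla$. *)

theory Defs
  imports "HOL-Analysis.Analysis"
begin

text \<open>Local model of a chart domain of the cotangent bundle: points are pairs
  (x, p) of coordinate vectors; tangent vectors at a point are pairs (a, b)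
  meaning a^i d/dx^i + b_i d/dp_i.\<close>

type_synonym 'n pt = "(real^'n) \<times> (real^'n)"

fun Ck_on :: "nat \<Rightarrow> 'a set \<Rightarrow> ('a::real_normed_vector \<Rightarrow> 'b::real_normed_vector) \<Rightarrow> bool" where
  "Ck_on 0 U f = continuous_on U f"
| "Ck_on (Suc k) U f =
     (f differentiable_on U \<and> (\<forall>v. Ck_on k U (\<lambda>z. frechet_derivative f (at z) v)))"

definition cinf_on :: "'a set \<Rightarrow> ('a::real_normed_vector \<Rightarrow> 'b::real_normed_vector) \<Rightarrow> bool" where
  "cinf_on U f \<longleftrightarrow> (\<forall>k. Ck_on k U f)"

definition vf :: "'n::finite pt set \<Rightarrow> ('n pt \<Rightarrow> 'n pt) \<Rightarrow> bool" where
  "vf U X \<longleftrightarrow> cinf_on U X"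

definition lie :: "('n::finite pt \<Rightarrow> 'n pt) \<Rightarrow> ('n pt \<Rightarrow> 'n pt) \<Rightarrow> 'n pt \<Rightarrow> 'n pt" where
  "lie X Y = (\<lambda>z. frechet_derivative Y (at z) (X z) - frechet_derivative X (at z) (Y z))"

text \<open>Action of a (1,1)-tensor field (pointwise linear map) on a vector field.\<close>
definition app :: "('n::finite pt \<Rightarrow> 'n pt \<Rightarrow> 'n pt) \<Rightarrow> ('n pt \<Rightarrow> 'n pt) \<Rightarrow> 'n pt \<Rightarrow> 'n pt" where
  "app T X = (\<lambda>z. T z (X z))"

definition Vert :: "'n::finite pt set" where
  "Vert = {w. fst w = 0}"

definition adapted_ats :: "'n::finite pt set \<Rightarrow> ('n pt \<Rightarrow> 'n pt \<Rightarrow> 'n pt) \<Rightarrow> bool" where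
  "adapted_ats U J \<longleftrightarrow>
     (\<forall>z\<in>U. linear (J z) \<and> (\<forall>w. J z (J z w) = 0) \<and>
             range (J z) = Vert \<and> {w. J z w = 0} = Vert)
     \<and> (\<forall>w. cinf_on U (\<lambda>z. J z w))"

text \<open>Components t_ij of J = t_ij dx^i (x) d/dp_j.\<close>
definition tcoef :: "('n::finite pt \<Rightarrow> 'n pt \<Rightarrow> 'n pt) \<Rightarrow> 'n pt \<Rightarrow> 'n \<Rightarrow> 'n \<Rightarrow> real" where
  "tcoef J z i j = snd (J z (axis i 1, 0)) $ j"

definition J_regular :: "'n::finite pt set \<Rightarrow> ('n pt \<Rightarrow> 'n pt \<Rightarrow> 'n pt) \<Rightarrow> ('n pt \<Rightarrow> 'n pt) \<Rightarrow> bool" where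
  "J_regular U J \<rho> \<longleftrightarrow>
     (\<forall>X. vf U X \<longrightarrow> (\<forall>z\<in>U. J z (lie \<rho> (app J X) z) = - J z (X z)))"

text \<open>Nonlinear connection, given by its smooth coefficients N_ij
  (delta/delta x^i = d/dx^i + N_ij d/dp_j).\<close>
definition nonlin_conn :: "'n::finite pt set \<Rightarrow> ('n pt \<Rightarrow> real^'n^'n) \<Rightarrow> bool" where
  "nonlin_conn U N \<longleftrightarrow> (\<forall>i j. cinf_on U (\<lambda>z. N z $ i $ j))"

definition hproj :: "('n::finite pt \<Rightarrow> real^'n^'n) \<Rightarrow> 'n pt \<Rightarrow> 'n pt \<Rightarrow> 'n pt" where
  "hproj N z w = (fst w, \<chi> j. \<Sum>i\<in>UNIV. N z $ i $ j * fst w $ i)"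

text \<open>Vertical projector v = d/dp_j (x) delta p_j, delta p_j = dp_j - N_ij dx^i.\<close>
definition vproj :: "('n::finite pt \<Rightarrow> real^'n^'n) \<Rightarrow> 'n pt \<Rightarrow> 'n pt \<Rightarrow> 'n pt" where
  "vproj N z w = (0, \<chi> j. snd w $ j - (\<Sum>i\<in>UNIV. N z $ i $ j * fst w $ i))"

definition dyn_nabla :: "('n::finite pt \<Rightarrow> 'n pt) \<Rightarrow> ('n pt \<Rightarrow> real^'n^'n) \<Rightarrow> ('n pt \<Rightarrow> 'n pt) \<Rightarrow> 'n pt \<Rightarrow> 'n pt" where
  "dyn_nabla \<rho> N X = (\<lambda>z. hproj N z (lie \<rho> (app (hproj N) X) z) + vproj N z (lie \<rho> (app (vproj N) X) z))"

definition dyn_nablaT :: "('n::finite pt \<Rightarrow> 'n pt) \<Rightarrow> ('n pt \<Rightarrow> real^'n^'n) \<Rightarrow> ('n pt \<Rightarrow> 'n pt \<Rightarrow> 'n pt) \<Rightarrow> ('n pt \<Rightarrow> 'n pt) \<Rightarrow> 'n pt \<Rightarrow> 'n pt" where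
  "dyn_nablaT \<rho> N T X = (\<lambda>z. dyn_nabla \<rho> N (app T X) z - T z (dyn_nabla \<rho> N X z))"

definition lieT :: "('n::finite pt \<Rightarrow> 'n pt) \<Rightarrow> ('n pt \<Rightarrow> 'n pt \<Rightarrow> 'n pt) \<Rightarrow> ('n pt \<Rightarrow> 'n pt) \<Rightarrow> 'n pt \<Rightarrow> 'n pt" where
  "lieT \<rho> T X = (\<lambda>z. lie \<rho> (app T X) z - T z (lie \<rho> X z))"

end

theory Submission imports Defs begin

lemma fd_local:
  assumes "open U" "z \<in> U" "\<And>y. y \<in> U \<Longrightarrow> f y = g y"
  shows "frechet_derivative f (at z) = frechet_derivative g (at z)"
proof -
  have "\<And>D. (f has_derivative D) (at z) \<longleftrightarrow> (g has_derivative D) (at z)"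
    using has_derivative_transform_within_open[of f _ z UNIV U g]
      has_derivative_transform_within_open[of g _ z UNIV U f] assms by auto
  then show ?thesis unfolding frechet_derivative_def by simp
qed

lemma diff_local:
  assumes "f differentiable at z" "open U" "z \<in> U" "\<And>y. y \<in> U \<Longrightarrow> f y = g y"
  shows "g differentiable at z"
  using assms has_derivative_transform_within_open[of f _ z UNIV U g]
  unfolding differentiable_def by blast

lemma cinf_diff: "cinf_on U f \<Longrightarrow> open U \<Longrightarrow> z \<in> U \<Longrightarrow> f differentiable (at z)"
  unfolding cinf_on_def
  by (metis Ck_on.simps(2) differentiable_on_eq_differentiable_at)

lemma Ck_const: "Ck_on k U (\<lambda>z. c)"
proof (induction k arbitrary: c)
  case 0 then show ?case by simp
next
  case (Suc k) then show ?case by simp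
qed

lemma cinf_const: "cinf_on U (\<lambda>z. c)"
  unfolding cinf_on_def using Ck_const by blast

lemma fd_blin:
  assumes "bounded_linear L" "f differentiable at z"
  shows "frechet_derivative (\<lambda>y. L (f y)) (at z) v = L (frechet_derivative f (at z) v)"
proof -
  have "((\<lambda>y. L (f y)) has_derivative (\<lambda>v. L (frechet_derivative f (at z) v))) (at z)"
    using bounded_linear.has_derivative[OF assms(1) frechet_derivative_works[THEN iffD1, OF assms(2)]] .
  from frechet_derivative_at[OF this] show ?thesis by metis
qed

lemma bl_fst_nth: "bounded_linear (\<lambda>w::'n::finite pt. fst w $ i)"
  by (rule bounded_linear_compose[OF bounded_linear_vec_nth bounded_linear_fst])
lemma bl_snd_nth: "bounded_linear (\<lambda>w::'n::finite pt. snd w $ i)"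
  by (rule bounded_linear_compose[OF bounded_linear_vec_nth bounded_linear_snd])

lemma fd_fst_nth: fixes f :: "'a::real_normed_vector \<Rightarrow> 'n::finite pt" shows "f differentiable at z \<Longrightarrow>
  frechet_derivative (\<lambda>y. fst (f y) $ i) (at z) v = fst (frechet_derivative f (at z) v) $ (i::'n::finite)"
  by (simp add: fd_blin[OF bl_fst_nth])
lemma fd_snd_nth: fixes f :: "'a::real_normed_vector \<Rightarrow> 'n::finite pt" shows "f differentiable at z \<Longrightarrow>
  frechet_derivative (\<lambda>y. snd (f y) $ i) (at z) v = snd (frechet_derivative f (at z) v) $ (i::'n::finite)"
  by (simp add: fd_blin[OF bl_snd_nth])

lemma fd_fst_zero:
  assumes "f differentiable at z" "open U" "z \<in> U" "\<And>y. y \<in> U \<Longrightarrow> fst (f y) = 0"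
  shows "fst (frechet_derivative f (at z) v) = 0"
proof -
  have "frechet_derivative (\<lambda>y. fst (f y)) (at z) v = fst (frechet_derivative f (at z) v)"
    using fd_blin[OF bounded_linear_fst assms(1)] .
  moreover have "frechet_derivative (\<lambda>y. fst (f y)) (at z) = frechet_derivative (\<lambda>y. 0) (at z)"
    by (rule fd_local[OF assms(2,3)]) (simp add: assms(4))
  ultimately show ?thesis by simp
qed

lemma vec_lambda_sum: "(\<chi> j. f j) = (\<Sum>j\<in>UNIV. f j *\<^sub>R axis j (1::real))"
  using basis_expansion[of "\<chi> j. f j"] by (simp add: scalar_mult_eq_scaleR)

lemma diff_vec_lambda:
  assumes "\<And>j. (\<lambda>y. f j y) differentiable at z"
  shows "(\<lambda>y. (\<chi> j. f j y)::real^'n::finite) differentiable at z"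
proof -
  have "(\<lambda>y. (\<Sum>j\<in>UNIV. f j y *\<^sub>R axis j (1::real))) differentiable at z"
    using assms by (intro differentiable_sum differentiable_scaleR) auto
  then show ?thesis by (simp add: vec_lambda_sum[symmetric])
qed


lemma fd_sum_mult:
  fixes f g :: "'i \<Rightarrow> 'a::real_normed_vector \<Rightarrow> real"
  assumes "\<And>i. f i differentiable at z" "\<And>i. g i differentiable at z"
  shows "frechet_derivative (\<lambda>y. \<Sum>i\<in>I. f i y * g i y) (at z) v =
     (\<Sum>i\<in>I. frechet_derivative (f i) (at z) v * g i z + f i z * frechet_derivative (g i) (at z) v)"
proof -
  have "((\<lambda>y. \<Sum>i\<in>I. f i y * g i y) has_derivative
     (\<lambda>v. \<Sum>i\<in>I. f i z * frechet_derivative (g i) (at z) v + frechet_derivative (f i) (at z) v * g i z)) (at z)"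
    using assms by (intro has_derivative_sum has_derivative_mult) (auto simp only: frechet_derivative_works[symmetric])
  from frechet_derivative_at[OF this] have "frechet_derivative (\<lambda>y. \<Sum>i\<in>I. f i y * g i y) (at z) =
     (\<lambda>v. \<Sum>i\<in>I. f i z * frechet_derivative (g i) (at z) v + frechet_derivative (f i) (at z) v * g i z)" by simp
  then show ?thesis by (simp add: add.commute)
qed

lemma adapt_D:
  assumes a: "adapted_ats U J" "z \<in> U"
  shows "linear (J z) \<and> (\<forall>w. J z (J z w) = 0) \<and> range (J z) = Vert \<and> {w. J z w = 0} = Vert"
proof -
  from a(1) have "\<forall>z\<in>U. linear (J z) \<and> (\<forall>w. J z (J z w) = 0) \<and> range (J z) = Vert \<and> {w. J z w = 0} = Vert"
    unfolding adapted_ats_def by (rule conjunct1)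
  then show ?thesis using a(2) by (rule bspec)
qed

lemma Jlin: "adapted_ats U J \<Longrightarrow> z \<in> U \<Longrightarrow> linear (J z)"
  using adapt_D by (rule conjunct1)

lemma Jfst0: "adapted_ats U J \<Longrightarrow> z \<in> U \<Longrightarrow> fst (J z w) = 0"
proof -
  assume a: "adapted_ats U J" "z \<in> U"
  have r: "range (J z) = Vert" using adapt_D[OF a] by simp
  have "J z w \<in> range (J z)" by simp
  then have "J z w \<in> Vert" by (simp only: r)
  then show ?thesis by (simp add: Vert_def)
qed

lemma Jker: "adapted_ats U J \<Longrightarrow> z \<in> U \<Longrightarrow> J z w = 0 \<longleftrightarrow> fst w = 0"
proof -
  assume a: "adapted_ats U J" "z \<in> U"
  have r: "{w. J z w = 0} = Vert" using adapt_D[OF a] by simp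
  have "J z w = 0 \<longleftrightarrow> w \<in> {w. J z w = 0}" by simp
  also have "\<dots> \<longleftrightarrow> w \<in> Vert" by (simp only: r)
  finally show ?thesis by (simp add: Vert_def)
qed

lemma Jsurj: "adapted_ats U J \<Longrightarrow> z \<in> U \<Longrightarrow> \<exists>w. J z w = (0, b)"
proof -
  assume a: "adapted_ats U J" "z \<in> U"
  have r: "range (J z) = Vert" using adapt_D[OF a] by simp
  have "(0, b) \<in> Vert" by (simp add: Vert_def)
  then have "(0, b) \<in> range (J z)" by (simp only: r)
  then show ?thesis by (metis rangeE)
qed

lemma Jfst:
  assumes "adapted_ats U J" "z \<in> U"
  shows "J z w = J z (fst w, 0)"
proof -
  have "w = (fst w, 0) + (0, snd w)" by simp
  then have "J z w = J z (fst w, 0) + J z (0, snd w)"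
    by (metis linear_add[OF Jlin[OF assms]])
  moreover have "J z (0, snd w) = 0" using Jker[OF assms] by simp
  ultimately show ?thesis by simp
qed

lemma pair_axis_sum: "((a::real^'n::finite), (0::real^'n)) = (\<Sum>i\<in>UNIV. a $ i *\<^sub>R (axis i 1, 0))"
  using basis_expansion[of a] by (simp add: prod_eq_iff fst_sum snd_sum scalar_mult_eq_scaleR)

lemma pair_axis_sum2: "((0::real^'n::finite), (b::real^'n)) = (\<Sum>i\<in>UNIV. b $ i *\<^sub>R (0, axis i 1))"
  using basis_expansion[of b] by (simp add: prod_eq_iff fst_sum snd_sum scalar_mult_eq_scaleR)

lemma jform:
  assumes "adapted_ats U J" "z \<in> U"
  shows "J z w = (0, \<chi> j. \<Sum>i\<in>UNIV. fst w $ i * tcoef J z i j)"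
proof -
  have "J z w = J z (\<Sum>i\<in>UNIV. fst w $ i *\<^sub>R (axis i 1, 0))"
    unfolding pair_axis_sum[of "fst w", symmetric] by (rule Jfst[OF assms])
  also have "\<dots> = (\<Sum>i\<in>UNIV. fst w $ i *\<^sub>R J z (axis i 1, 0))"
    by (rule trans[OF linear_sum[OF Jlin[OF assms]]], rule sum.cong[OF refl], rule linear_scale[OF Jlin[OF assms]])
  finally have e: "J z w = (\<Sum>i\<in>UNIV. fst w $ i *\<^sub>R J z (axis i 1, 0))" .
  show ?thesis
    unfolding e using Jfst0[OF assms]
    by (simp add: prod_eq_iff fst_sum snd_sum vec_eq_iff sum_component tcoef_def)
qed

lemma K1:
  fixes U :: "'n::finite pt set"
  assumes U: "open U" and A: "adapted_ats U J" and R: "vf U \<rho>" and reg: "J_regular U J \<rho>" and z: "z \<in> U"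
  shows "fst (frechet_derivative \<rho> (at z) (J z (a,0))) = a"
proof -
  define X where "X = (\<lambda>y::'n pt. (a, 0::real^'n))"
  have vX: "vf U X" unfolding vf_def X_def by (rule cinf_const)
  have r: "J z (lie \<rho> (app J X) z) = - J z (X z)" using reg vX z unfolding J_regular_def by blast
  define G where "G = (\<lambda>y. J y (a, 0))"
  have aJ: "app J X = G" unfolding app_def X_def G_def by simp
  have Gd: "G differentiable at z" unfolding G_def
    using A cinf_diff[OF _ U z] unfolding adapted_ats_def by blast
  have f0: "fst (frechet_derivative G (at z) (\<rho> z)) = 0"
    by (rule fd_fst_zero[OF Gd U z]) (simp add: G_def Jfst0[OF A])
  define c where "c = fst (frechet_derivative \<rho> (at z) (J z (a,0)))"
  have fl: "fst (lie \<rho> G z) = - c" unfolding lie_def c_def G_def using f0 G_def by simp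
  have "J z (lie \<rho> G z) = J z (- c, 0)" using Jfst[OF A z, of "lie \<rho> G z"] fl by simp
  also have "\<dots> = - J z (c, 0)" using linear_neg[OF Jlin[OF A z], of "(c,0)"] by simp
  finally have "J z (c, 0) = J z (a, 0)" using r aJ X_def by simp
  then have "J z ((c, 0) - (a, 0)) = 0" using linear_diff[OF Jlin[OF A z], of "(c,0)" "(a,0)"] by simp
  then have "c - a = 0" using Jker[OF A z, of "(c,0) - (a,0)"] by simp
  then show ?thesis unfolding c_def by simp
qed

lemma K2:
  fixes U :: "'n::finite pt set"
  assumes U: "open U" and A: "adapted_ats U J" and R: "vf U \<rho>" and reg: "J_regular U J \<rho>" and z: "z \<in> U"
  shows "J z (fst (frechet_derivative \<rho> (at z) (0, b)), 0) = (0, b)"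
proof -
  obtain w where w: "J z w = (0, b)" using Jsurj[OF A z] by blast
  then have w2: "J z (fst w, 0) = (0, b)" using Jfst[OF A z] by metis
  have "fst (frechet_derivative \<rho> (at z) (J z (fst w, 0))) = fst w" by (rule K1[OF U A R reg z])
  then show ?thesis using w2 by simp
qed

lemma alg:
  fixes Da a t Dt Dchi Nn d :: "'i \<Rightarrow> real" and Xi :: "'i \<Rightarrow> 'i \<Rightarrow> real" and T :: "'i \<Rightarrow> 'i \<Rightarrow> real"
  assumes "finite I" and hd: "(\<Sum>i\<in>I. d i * t i) = (\<Sum>i\<in>I. Nn i * a i)"
  shows "(\<Sum>i\<in>I. Da i * t i + a i * Dt i) - (\<Sum>k\<in>I. (\<Sum>i\<in>I. a i * T i k) * Dchi k) + (\<Sum>i\<in>I. Nn i * a i)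
     - (\<Sum>i\<in>I. (Da i - (\<Sum>l\<in>I. a l * Xi i l) - d i) * t i)
   = (\<Sum>i\<in>I. (Dt i + (\<Sum>k\<in>I. t k * Xi k i) - (\<Sum>k\<in>I. T i k * Dchi k) + 2 * Nn i) * a i)"
proof -
  have e1: "(\<Sum>i\<in>I. (Da i - (\<Sum>l\<in>I. a l * Xi i l) - d i) * t i)
     = (\<Sum>i\<in>I. Da i * t i) - (\<Sum>i\<in>I. \<Sum>l\<in>I. a l * Xi i l * t i) - (\<Sum>i\<in>I. d i * t i)"
    by (simp add: algebra_simps sum_subtractf sum.distrib sum_distrib_right sum_distrib_left)
  have e2: "(\<Sum>i\<in>I. \<Sum>l\<in>I. a l * Xi i l * t i) = (\<Sum>i\<in>I. (\<Sum>k\<in>I. t k * Xi k i) * a i)"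
    by (subst sum.swap) (simp add: sum_distrib_right sum_distrib_left mult_ac)
  have e3: "(\<Sum>k\<in>I. (\<Sum>i\<in>I. a i * T i k) * Dchi k) = (\<Sum>i\<in>I. (\<Sum>k\<in>I. T i k * Dchi k) * a i)"
    by (simp add: sum_distrib_right sum_distrib_left mult_ac) (rule sum.swap)
  show ?thesis unfolding e1 e2 e3 hd
    by (simp add: algebra_simps sum.distrib sum_subtractf sum_distrib_left sum_distrib_right)
qed

lemma diff_blin: "bounded_linear L \<Longrightarrow> f differentiable at z \<Longrightarrow> (\<lambda>y. L (f y)) differentiable at z"
  unfolding differentiable_def using bounded_linear.has_derivative by blast

lemma hv_id: "hproj N z w + vproj N z w = w"
  by (simp add: hproj_def vproj_def prod_eq_iff vec_eq_iff)

lemma fd_add: "f differentiable at z \<Longrightarrow> g differentiable at z \<Longrightarrow>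
   frechet_derivative (\<lambda>y. f y + g y) (at z) v = frechet_derivative f (at z) v + frechet_derivative g (at z) v"
proof -
  assume a: "f differentiable at z" "g differentiable at z"
  have "((\<lambda>y. f y + g y) has_derivative (\<lambda>v. frechet_derivative f (at z) v + frechet_derivative g (at z) v)) (at z)"
    using a by (intro has_derivative_add) (auto simp only: frechet_derivative_works[symmetric])
  from frechet_derivative_at[OF this] show ?thesis by metis
qed

context
  fixes U :: "'n::finite pt set" and J \<rho> and N :: "'n pt \<Rightarrow> real^'n^'n"
  assumes U: "open U" and A: "adapted_ats U J" and R: "vf U \<rho>" and reg: "J_regular U J \<rho>"
    and NC: "nonlin_conn U N"
begin

lemma Rd: "z \<in> U \<Longrightarrow> \<rho> differentiable at z"
  using R cinf_diff[OF _ U] unfolding vf_def by blast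

lemma Xd: "vf U X \<Longrightarrow> z \<in> U \<Longrightarrow> X differentiable at z"
  using cinf_diff[OF _ U] unfolding vf_def by blast

lemma Nd: "z \<in> U \<Longrightarrow> (\<lambda>y. N y $ i $ j) differentiable at z"
  using NC cinf_diff[OF _ U] unfolding nonlin_conn_def by blast

lemma Xfd: "vf U X \<Longrightarrow> z \<in> U \<Longrightarrow> (\<lambda>y. fst (X y) $ i) differentiable at z"
  using diff_blin[OF bl_fst_nth Xd] by blast
lemma Xsd: "vf U X \<Longrightarrow> z \<in> U \<Longrightarrow> (\<lambda>y. snd (X y) $ i) differentiable at z"
  using diff_blin[OF bl_snd_nth Xd] by blast

lemma td: "z \<in> U \<Longrightarrow> (\<lambda>y. tcoef J y i j) differentiable at z"
  unfolding tcoef_def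
  using A cinf_diff[OF _ U] diff_blin[OF bl_snd_nth] unfolding adapted_ats_def by blast

lemma NXd: "vf U X \<Longrightarrow> z \<in> U \<Longrightarrow> (\<lambda>x. N x $ i $ j * fst (X x) $ i) differentiable at z"
  by (rule differentiable_mult[OF Nd Xfd])

lemma hXd: "vf U X \<Longrightarrow> z \<in> U \<Longrightarrow> app (hproj N) X differentiable at z"
  unfolding app_def hproj_def
  by (intro differentiable_Pair diff_vec_lambda differentiable_sum
      diff_blin[OF bounded_linear_fst] Xd) (auto simp: NXd)

lemma vXd: "vf U X \<Longrightarrow> z \<in> U \<Longrightarrow> app (vproj N) X differentiable at z"
  unfolding app_def vproj_def
  by (intro differentiable_Pair diff_vec_lambda differentiable_sum Xsd
      differentiable_diff differentiable_const) (auto simp: NXd)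

lemma P1: "vf U X \<Longrightarrow> z \<in> U \<Longrightarrow> fst (lie \<rho> (app J X) z) = - fst (X z)"
proof -
  assume vX: "vf U X" and z: "z \<in> U"
  define L where "L = lie \<rho> (app J X) z"
  have r: "J z L = - J z (X z)" using reg vX z unfolding J_regular_def L_def by blast
  have "J z (fst L, 0) = - J z (fst (X z), 0)" using r Jfst[OF A z] by metis
  also have "\<dots> = J z (- fst (X z), 0)" using linear_neg[OF Jlin[OF A z], of "(fst (X z), 0)"] by simp
  moreover have "J z ((fst L, 0) - (- fst (X z), 0)) = J z (fst L, 0) - J z (- fst (X z), 0)"
    by (rule linear_diff[OF Jlin[OF A z]])
  ultimately have "J z ((fst L, 0) - (- fst (X z), 0)) = 0" by simp
  then have "fst L + fst (X z) = 0" using Jker[OF A z, of "(fst L, 0) - (- fst (X z), 0)"] by simp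
  then show ?thesis unfolding L_def by (simp add: eq_neg_iff_add_eq_0)
qed

lemma part1: "vf U X \<Longrightarrow> z \<in> U \<Longrightarrow> hproj N z (lie \<rho> (app J X) z) = - hproj N z (X z)"
  using P1[of X z] by (simp add: hproj_def prod_eq_iff vec_eq_iff sum_negf)

lemma part2: "vf U X \<Longrightarrow> z \<in> U \<Longrightarrow> J z (lie \<rho> (app (vproj N) X) z) = - vproj N z (X z)"
proof -
  assume vX: "vf U X" and z: "z \<in> U"
  define Y where "Y = app (vproj N) X"
  have Yd: "Y differentiable at z" unfolding Y_def by (rule vXd[OF vX z])
  have f0: "fst (frechet_derivative Y (at z) (\<rho> z)) = 0"
    by (rule fd_fst_zero[OF Yd U z]) (simp add: Y_def app_def vproj_def)
  define s where "s = snd (Y z)"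
  have Yz: "Y z = (0, s)" unfolding s_def by (simp add: Y_def app_def vproj_def)
  have fl: "fst (lie \<rho> Y z) = - fst (frechet_derivative \<rho> (at z) (0, s))"
    unfolding lie_def using f0 Yz by simp
  have "J z (lie \<rho> Y z) = J z (- fst (frechet_derivative \<rho> (at z) (0, s)), 0)"
    using Jfst[OF A z, of "lie \<rho> Y z"] fl by simp
  also have "\<dots> = - J z (fst (frechet_derivative \<rho> (at z) (0, s)), 0)"
    using linear_neg[OF Jlin[OF A z], of "(fst (frechet_derivative \<rho> (at z) (0, s)), 0)"] by simp
  also have "\<dots> = - (0, s)" using K2[OF U A R reg z] by simp
  finally show ?thesis using Yz unfolding Y_def by (simp add: app_def)
qed


lemma JXd: "vf U X \<Longrightarrow> z \<in> U \<Longrightarrow> app J X differentiable at z"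
proof -
  assume vX: "vf U X" and z: "z \<in> U"
  define G where "G = (\<lambda>y. ((0::real^'n), \<chi> j. \<Sum>i\<in>UNIV. fst (X y) $ i * tcoef J y i j))"
  have Gd: "G differentiable at z" unfolding G_def
    by (intro differentiable_Pair diff_vec_lambda differentiable_sum differentiable_mult
        Xfd[OF vX z] td[OF z] differentiable_const) (auto intro!: differentiable_mult Xfd[OF vX z] td[OF z])
  show ?thesis
    by (rule diff_local[OF Gd U z]) (simp add: G_def app_def jform[OF A])
qed

lemma p3i: "vf U X \<Longrightarrow> z \<in> U \<Longrightarrow> lie \<rho> (app (hproj N) (app J X)) z = 0"
proof -
  assume vX: "vf U X" and z: "z \<in> U"
  have h0: "\<And>y. y \<in> U \<Longrightarrow> app (hproj N) (app J X) y = 0"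
    by (simp add: app_def hproj_def Jfst0[OF A] prod_eq_iff vec_eq_iff)
  have "frechet_derivative (app (hproj N) (app J X)) (at z) = frechet_derivative (\<lambda>y. 0) (at z)"
    by (rule fd_local[OF U z h0])
  then show ?thesis unfolding lie_def using h0[OF z]
      linear_0[OF linear_frechet_derivative[OF Rd[OF z]]] by simp
qed

lemma p3ii: "vf U X \<Longrightarrow> z \<in> U \<Longrightarrow> lie \<rho> (app (vproj N) (app J X)) z = lie \<rho> (app J X) z"
proof -
  assume vX: "vf U X" and z: "z \<in> U"
  have h0: "\<And>y. y \<in> U \<Longrightarrow> app (vproj N) (app J X) y = app J X y"
    by (simp add: app_def vproj_def Jfst0[OF A] prod_eq_iff vec_eq_iff)
  have "frechet_derivative (app (vproj N) (app J X)) (at z) = frechet_derivative (app J X) (at z)"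
    by (rule fd_local[OF U z h0])
  then show ?thesis unfolding lie_def using h0[OF z] by simp
qed

lemma p3iii: "vf U X \<Longrightarrow> z \<in> U \<Longrightarrow> dyn_nabla \<rho> N (app J X) z = vproj N z (lie \<rho> (app J X) z)"
proof -
  assume vX: "vf U X" and z: "z \<in> U"
  have "hproj N z 0 = 0" by (simp add: hproj_def prod_eq_iff vec_eq_iff)
  then show ?thesis unfolding dyn_nabla_def using p3i[OF vX z] p3ii[OF vX z] by simp
qed

lemma Jh: "z \<in> U \<Longrightarrow> J z (hproj N z w) = J z w"
  using Jfst[OF A, of z "hproj N z w"] Jfst[OF A, of z w] by (simp add: hproj_def)

lemma Jv: "z \<in> U \<Longrightarrow> J z (vproj N z w) = 0"
  using Jker[OF A] by (simp add: vproj_def)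

lemma p3iv: "vf U X \<Longrightarrow> z \<in> U \<Longrightarrow> J z (dyn_nabla \<rho> N X z) = J z (lie \<rho> (app (hproj N) X) z)"
  unfolding dyn_nabla_def using linear_add[OF Jlin[OF A]] Jh Jv by simp

lemma p3v: "vf U X \<Longrightarrow> z \<in> U \<Longrightarrow>
    lie \<rho> X z = lie \<rho> (app (hproj N) X) z + lie \<rho> (app (vproj N) X) z"
proof -
  assume vX: "vf U X" and z: "z \<in> U"
  have e: "X = (\<lambda>y. app (hproj N) X y + app (vproj N) X y)" by (simp add: app_def hv_id)
  have "frechet_derivative X (at z) (\<rho> z) = frechet_derivative (app (hproj N) X) (at z) (\<rho> z)
      + frechet_derivative (app (vproj N) X) (at z) (\<rho> z)"
    by (subst e, rule fd_add[OF hXd[OF vX z] vXd[OF vX z]])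
  moreover have "frechet_derivative \<rho> (at z) (X z) = frechet_derivative \<rho> (at z) (app (hproj N) X z)
      + frechet_derivative \<rho> (at z) (app (vproj N) X z)"
    using linear_add[OF linear_frechet_derivative[OF Rd[OF z]], of "hproj N z (X z)" "vproj N z (X z)"]
    by (simp add: app_def hv_id)
  ultimately show ?thesis unfolding lie_def by (simp add: algebra_simps)
qed

lemma NF: "vf U X \<Longrightarrow> z \<in> U \<Longrightarrow>
   dyn_nablaT \<rho> N J X z = vproj N z (lie \<rho> (app J X) z) - J z (lie \<rho> (app (hproj N) X) z)"
  unfolding dyn_nablaT_def using p3iii p3iv by simp

lemma part3: "vf U X \<Longrightarrow> z \<in> U \<Longrightarrow>
   dyn_nablaT \<rho> N J X z = lieT \<rho> J X z + hproj N z (X z) - vproj N z (X z)"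
proof -
  assume vX: "vf U X" and z: "z \<in> U"
  define L where "L = lie \<rho> (app J X) z"
  have L: "L = - hproj N z (X z) + vproj N z L"
    using hv_id[of N z L] part1[OF vX z] unfolding L_def by (metis)
  have JL: "J z (lie \<rho> X z) = J z (lie \<rho> (app (hproj N) X) z) - vproj N z (X z)"
    using p3v[OF vX z] linear_add[OF Jlin[OF A z]] part2[OF vX z] by simp
  show ?thesis unfolding NF[OF vX z] lieT_def JL L_def[symmetric]
    by (subst (2) L) (simp add: algebra_simps)
qed


lemma part4: "vf U X \<Longrightarrow> z \<in> U \<Longrightarrow>
             dyn_nablaT \<rho> N J X z =
               (0, \<chi> j. \<Sum>i\<in>UNIV.
                  (frechet_derivative (\<lambda>y. tcoef J y i j) (at z) (\<rho> z)
                   + (\<Sum>k\<in>UNIV. tcoef J z k j *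
                        frechet_derivative (\<lambda>y. fst (\<rho> y) $ k) (at z) (axis i 1, 0))
                   - (\<Sum>k\<in>UNIV. tcoef J z i k *
                        frechet_derivative (\<lambda>y. snd (\<rho> y) $ j) (at z) (0, axis k 1))
                   + 2 * N z $ i $ j) * fst (X z) $ i)"
proof -
  assume vX: "vf U X" and z: "z \<in> U"
  define L where "L = lie \<rho> (app J X) z"
  define H where "H = lie \<rho> (app (hproj N) X) z"
  define Dr where "Dr = frechet_derivative \<rho> (at z)"
  have Drl: "linear Dr" unfolding Dr_def by (rule linear_frechet_derivative[OF Rd[OF z]])
  define a where "a = fst (X z)"
  define Da where "Da = (\<lambda>i. frechet_derivative (\<lambda>y. fst (X y) $ i) (at z) (\<rho> z))"
  define Dt where "Dt = (\<lambda>i j. frechet_derivative (\<lambda>y. tcoef J y i j) (at z) (\<rho> z))"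
  define Dchi where "Dchi = (\<lambda>j k. frechet_derivative (\<lambda>y. snd (\<rho> y) $ j) (at z) (0, axis k 1))"
  define Xi where "Xi = (\<lambda>i l. frechet_derivative (\<lambda>y. fst (\<rho> y) $ i) (at z) (axis l 1, 0))"
  define n where "n = (\<chi> j. \<Sum>i\<in>UNIV. N z $ i $ j * a $ i)"
  define d where "d = fst (Dr (0, n))"
  define G where "G = (\<lambda>y. ((0::real^'n), \<chi> j. \<Sum>i\<in>UNIV. fst (X y) $ i * tcoef J y i j))"
  have Gd: "G differentiable at z" unfolding G_def
    by (intro differentiable_Pair diff_vec_lambda differentiable_sum differentiable_mult
        Xfd[OF vX z] td[OF z] differentiable_const) (auto intro!: differentiable_mult Xfd[OF vX z] td[OF z])
  have S1: "snd (vproj N z L) $ j = snd L $ j + (\<Sum>i\<in>UNIV. N z $ i $ j * a $ i)" for j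
    using P1[OF vX z] unfolding L_def a_def by (simp add: vproj_def sum_negf)
  have S2a: "frechet_derivative (app J X) (at z) = frechet_derivative G (at z)"
    by (rule fd_local[OF U z]) (simp add: G_def app_def jform[OF A])
  have S2b: "snd (frechet_derivative G (at z) (\<rho> z)) $ j = (\<Sum>i\<in>UNIV. Da i * tcoef J z i j + a $ i * Dt i j)" for j
  proof -
    have "snd (frechet_derivative G (at z) (\<rho> z)) $ j = frechet_derivative (\<lambda>y. snd (G y) $ j) (at z) (\<rho> z)"
      by (rule fd_snd_nth[OF Gd, symmetric])
    also have "(\<lambda>y. snd (G y) $ j) = (\<lambda>y. \<Sum>i\<in>UNIV. fst (X y) $ i * tcoef J y i j)" by (simp add: G_def)
    also have "frechet_derivative (\<lambda>y. \<Sum>i\<in>UNIV. fst (X y) $ i * tcoef J y i j) (at z) (\<rho> z)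
       = (\<Sum>i\<in>UNIV. Da i * tcoef J z i j + a $ i * Dt i j)"
      unfolding Da_def Dt_def a_def by (rule fd_sum_mult[OF Xfd[OF vX z] td[OF z]])
    finally show ?thesis .
  qed
  have S2c: "snd (Dr (J z (X z))) $ j = (\<Sum>k\<in>UNIV. (\<Sum>i\<in>UNIV. a $ i * tcoef J z i k) * Dchi j k)" for j
  proof -
    define c where "c = (\<chi> k. \<Sum>i\<in>UNIV. a $ i * tcoef J z i k)"
    have "J z (X z) = (0, c)" unfolding c_def a_def by (rule jform[OF A z])
    then have "Dr (J z (X z)) = Dr (\<Sum>k\<in>UNIV. c $ k *\<^sub>R (0, axis k 1))"
      using pair_axis_sum2[of c] by metis
    also have "\<dots> = (\<Sum>k\<in>UNIV. Dr (c $ k *\<^sub>R (0, axis k 1)))" by (rule linear_sum[OF Drl])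
    also have "\<dots> = (\<Sum>k\<in>UNIV. c $ k *\<^sub>R Dr (0, axis k 1))" by (rule sum.cong[OF refl], rule linear_scale[OF Drl])
    finally have "Dr (J z (X z)) = (\<Sum>k\<in>UNIV. c $ k *\<^sub>R Dr (0, axis k 1))" .
    moreover have "snd (Dr (0, axis k 1)) $ j = Dchi j k" for k
      unfolding Dr_def Dchi_def by (rule fd_snd_nth[OF Rd[OF z], symmetric])
    ultimately show ?thesis by (simp add: snd_sum sum_component c_def)
  qed
  have S2: "snd L $ j = (\<Sum>i\<in>UNIV. Da i * tcoef J z i j + a $ i * Dt i j)
      - (\<Sum>k\<in>UNIV. (\<Sum>i\<in>UNIV. a $ i * tcoef J z i k) * Dchi j k)" for j
    unfolding L_def lie_def S2a using S2b S2c unfolding Dr_def by (simp add: app_def)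
  have S3a: "fst (frechet_derivative (app (hproj N) X) (at z) (\<rho> z)) $ i = Da i" for i
  proof -
    have "fst (frechet_derivative (app (hproj N) X) (at z) (\<rho> z)) $ i
       = frechet_derivative (\<lambda>y. fst (app (hproj N) X y) $ i) (at z) (\<rho> z)"
      by (rule fd_fst_nth[OF hXd[OF vX z], symmetric])
    also have "(\<lambda>y. fst (app (hproj N) X y) $ i) = (\<lambda>y. fst (X y) $ i)" by (simp add: app_def hproj_def)
    finally show ?thesis unfolding Da_def .
  qed
  have S3b: "fst (Dr (a, 0)) $ i = (\<Sum>l\<in>UNIV. a $ l * Xi i l)" for i
  proof -
    have "Dr (a, 0) = Dr (\<Sum>l\<in>UNIV. a $ l *\<^sub>R (axis l 1, 0))"
      using pair_axis_sum[of a] by metis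
    also have "\<dots> = (\<Sum>l\<in>UNIV. Dr (a $ l *\<^sub>R (axis l 1, 0)))" by (rule linear_sum[OF Drl])
    also have "\<dots> = (\<Sum>l\<in>UNIV. a $ l *\<^sub>R Dr (axis l 1, 0))" by (rule sum.cong[OF refl], rule linear_scale[OF Drl])
    finally have "Dr (a, 0) = (\<Sum>l\<in>UNIV. a $ l *\<^sub>R Dr (axis l 1, 0))" .
    moreover have "fst (Dr (axis l 1, 0)) $ i = Xi i l" for l
      unfolding Dr_def Xi_def by (rule fd_fst_nth[OF Rd[OF z], symmetric])
    ultimately show ?thesis by (simp add: fst_sum sum_component)
  qed
  have hXz: "app (hproj N) X z = (a, 0) + (0, n)"
    by (simp add: app_def hproj_def a_def n_def)
  have S3: "fst H $ i = Da i - (\<Sum>l\<in>UNIV. a $ l * Xi i l) - d $ i" for i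
  proof -
    have "Dr (app (hproj N) X z) = Dr (a, 0) + Dr (0, n)" unfolding hXz by (rule linear_add[OF Drl])
    then show ?thesis unfolding H_def lie_def using S3a S3b unfolding Dr_def d_def by simp
  qed
  have S4: "(\<Sum>i\<in>UNIV. d $ i * tcoef J z i j) = (\<Sum>i\<in>UNIV. N z $ i $ j * a $ i)" for j
  proof -
    have "J z (d, 0) = (0, n)" unfolding d_def Dr_def by (rule K2[OF U A R reg z])
    then have "snd (J z (d, 0)) $ j = n $ j" by simp
    then show ?thesis unfolding jform[OF A z] n_def by simp
  qed
  have S5: "snd (J z H) $ j = (\<Sum>i\<in>UNIV. (Da i - (\<Sum>l\<in>UNIV. a $ l * Xi i l) - d $ i) * tcoef J z i j)" for j
    unfolding jform[OF A z] using S3 by simp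
  have F: "fst (vproj N z L) = fst (J z H)" by (simp add: vproj_def Jfst0[OF A z])
  have Sn: "snd (vproj N z L) $ j - snd (J z H) $ j = (\<Sum>i\<in>UNIV.
                  (frechet_derivative (\<lambda>y. tcoef J y i j) (at z) (\<rho> z)
                   + (\<Sum>k\<in>UNIV. tcoef J z k j *
                        frechet_derivative (\<lambda>y. fst (\<rho> y) $ k) (at z) (axis i 1, 0))
                   - (\<Sum>k\<in>UNIV. tcoef J z i k *
                        frechet_derivative (\<lambda>y. snd (\<rho> y) $ j) (at z) (0, axis k 1))
                   + 2 * N z $ i $ j) * fst (X z) $ i)" for j
      unfolding S1 S2 S5
      using alg[of UNIV "\<lambda>i. d $ i" "\<lambda>i. tcoef J z i j" "\<lambda>i. N z $ i $ j" "\<lambda>i. a $ i" Da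
          "\<lambda>i. Dt i j" "\<lambda>i k. tcoef J z i k" "Dchi j" Xi, OF _ S4]
      unfolding Dt_def Dchi_def Xi_def a_def by simp
  show ?thesis
    unfolding NF[OF vX z] L_def[symmetric] H_def[symmetric]
    using F Sn by (simp add: prod_eq_iff vec_eq_iff)
qed

end

theorem mainTheorem2:
  fixes U :: "('n::finite) pt set"
    and J :: "'n pt \<Rightarrow> 'n pt \<Rightarrow> 'n pt"
    and \<rho> :: "'n pt \<Rightarrow> 'n pt"
    and N :: "'n pt \<Rightarrow> real^'n^'n"
  assumes "open U" and "U \<subseteq> {z. snd z \<noteq> 0}"
    and "adapted_ats U J"
    and "vf U \<rho>" and "J_regular U J \<rho>"
    and "nonlin_conn U N"
  shows "(\<forall>X. vf U X \<longrightarrow> (\<forall>z\<in>U. hproj N z (lie \<rho> (app J X) z) = - hproj N z (X z)))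
       \<and> (\<forall>X. vf U X \<longrightarrow> (\<forall>z\<in>U. J z (lie \<rho> (app (vproj N) X) z) = - vproj N z (X z)))
       \<and> (\<forall>X. vf U X \<longrightarrow> (\<forall>z\<in>U.
             dyn_nablaT \<rho> N J X z = lieT \<rho> J X z + hproj N z (X z) - vproj N z (X z)))
       \<and> (\<forall>X. vf U X \<longrightarrow> (\<forall>z\<in>U.
             dyn_nablaT \<rho> N J X z =
               (0, \<chi> j. \<Sum>i\<in>UNIV.
                  (frechet_derivative (\<lambda>y. tcoef J y i j) (at z) (\<rho> z)
                   + (\<Sum>k\<in>UNIV. tcoef J z k j *
                        frechet_derivative (\<lambda>y. fst (\<rho> y) $ k) (at z) (axis i 1, 0))
                   - (\<Sum>k\<in>UNIV. tcoef J z i k *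
                        frechet_derivative (\<lambda>y. snd (\<rho> y) $ j) (at z) (0, axis k 1))
                   + 2 * N z $ i $ j) * fst (X z) $ i)))"
  using part1[OF assms(1,3-6)] part2[OF assms(1,3-6)] part3[OF assms(1,3-6)] part4[OF assms(1,3-6)]
  by blast

end
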